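(* In the errorless symmetric relay network described in the context, under the greedy policy $G$ the AoI reductions satisfy, for every time slot $t\ge1$, \[ R(\mathcal{S}^{G}(t))=\min\{tS,K\},\qquad R(\mathcal{U}^{G}(t))=\min\{(t-1)U,K\}. \]
   Context: Fix integers $K\ge 2$ and $S,U$ with $1\le S<K$, $1\le U<K$, and $S=U$. There are $K$ processes indexed by $k\in\{1,\dots,K\}$ and time slots $t=1,2,\dots$. The state at time $t$ consists of relay AoI values $g_k(t)$ and destination AoI values $h_k(t)$, with $g_k(1)=h_k(1)=1$ for all $k$. A policy $\pi$ is a map assigning to the current state a pair $(\mathcal{S}^{\pi}(t),\mathcal{U}^{\pi}(t))$ of subsets of $\{1,\dots,K\}$ with $|\mathcal{S}^{\pi}(t)|=S$ and $|\mathcal{U}^{\pi}(t)|=U$. Errorless dynamics: $g_k(t+1)=1$ if $k\in\mathcal{S}(t)$, else $g_k(t+1)=g_k(t)+1$; $h_k(t+1)=g_k(t)+1$ if $k\in\mathcal{U}(t)$, else $h_k(t+1)=h_k(t)+1$. Define $R(\mathcal{S}^{\pi}(\tau))=\sum_{k\in\mathcal{S}^{\pi}(\tau)} g_k^{\pi}(\tau)$ and $R(\mathcal{U}^{\pi}(\tau))=\sum_{k\in\mathcal{U}^{\pi}(\tau)}(h_k^{\pi}(\tau)-g_k^{\pi}(\tau))$. The greedy policy $G$ chooses at each time $t$ a set $\mathcal{S}^G(t)$ of $S$ indices with the largest values $g_k(t)$ (maximizing $\sum_{k\in\mathcal{S}}g_k(t)$ over $|\mathcal{S}|=S$) and a set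 $\mathcal{U}^G(t)$ of $U$ indices with the largest gaps $h_k(t)-g_k(t)$ (maximizing $\sum_{k\in\mathcal{U}}(h_k(t)-g_k(t))$ over $|\mathcal{U}|=U$). *)

theory Defs
  imports Main
begin

text \<open>A state is a pair (g, h) of relay AoI and destination AoI vectors,
  indexed by processes k (only k in {1..K} are relevant).
  A policy maps the current state to a pair (S-set, U-set).\<close>

type_synonym state = "(nat \<Rightarrow> int) \<times> (nat \<Rightarrow> int)"
type_synonym policy = "state \<Rightarrow> nat set \<times> nat set"

definition step :: "policy \<Rightarrow> state \<Rightarrow> state" where
  "step pol st =
     (let (g, h) = st; (Ss, Us) = pol st in
      ((\<lambda>k. if k \<in> Ss then 1 else g k + 1),
       (\<lambda>k. if k \<in> Us then g k + 1 else h k + 1)))"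

text \<open>aoi pol n is the state at time slot t = n + 1 (so aoi pol 0 is time 1,
  where g_k(1) = h_k(1) = 1).\<close>
primrec aoi :: "policy \<Rightarrow> nat \<Rightarrow> state" where
  "aoi pol 0 = ((\<lambda>_. 1), (\<lambda>_. 1))"
| "aoi pol (Suc n) = step pol (aoi pol n)"

definition state_at :: "policy \<Rightarrow> nat \<Rightarrow> state" where
  "state_at pol t = aoi pol (t - 1)"

definition Sset :: "policy \<Rightarrow> nat \<Rightarrow> nat set" where
  "Sset pol t = fst (pol (state_at pol t))"

definition Uset :: "policy \<Rightarrow> nat \<Rightarrow> nat set" where
  "Uset pol t = snd (pol (state_at pol t))"

definition R_S :: "policy \<Rightarrow> nat \<Rightarrow> int" where
  "R_S pol t = (\<Sum>k\<in>Sset pol t. fst (state_at pol t) k)"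

definition R_U :: "policy \<Rightarrow> nat \<Rightarrow> int" where
  "R_U pol t = (\<Sum>k\<in>Uset pol t. snd (state_at pol t) k - fst (state_at pol t) k)"

definition greedy :: "nat \<Rightarrow> nat \<Rightarrow> nat \<Rightarrow> policy \<Rightarrow> bool" where
  "greedy K S U pol \<longleftrightarrow>
     (\<forall>g h. let (Ss, Us) = pol (g, h) in
        Ss \<subseteq> {1..K} \<and> card Ss = S \<and>
        (\<forall>A. A \<subseteq> {1..K} \<and> card A = S \<longrightarrow> (\<Sum>k\<in>A. g k) \<le> (\<Sum>k\<in>Ss. g k)) \<and>
        Us \<subseteq> {1..K} \<and> card Us = U \<and>
        (\<forall>A. A \<subseteq> {1..K} \<and> card A = U \<longrightarrow>
              (\<Sum>k\<in>A. h k - g k) \<le> (\<Sum>k\<in>Us. h k - g k)))"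

end

theory Submission
  imports Defs
begin

lemma opt_swap:
  fixes f :: "nat \<Rightarrow> int"
  assumes B: "B \<subseteq> {1..K}" and cB: "card B = S"
    and opt: "\<forall>A. A \<subseteq> {1..K} \<and> card A = S \<longrightarrow> sum f A \<le> sum f B"
    and k: "k \<in> B" and j: "j \<in> {1..K}" "j \<notin> B"
  shows "f j \<le> f k"
proof -
  have fin: "finite B" using B finite_subset by blast
  let ?A = "insert j (B - {k})"
  have "?A \<subseteq> {1..K}" using B j by auto
  moreover have "card ?A = S" using fin k j cB
    by (simp add: card_Diff_singleton) (metis One_nat_def Suc_pred card_gt_0_iff empty_iff)
  ultimately have "sum f ?A \<le> sum f B" using opt by blast
  moreover have "sum f ?A = f j + (sum f B - f k)"
    using fin k j by (simp add: sum_diff1)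
  ultimately show ?thesis by simp
qed

lemma upper_card:
  fixes g :: "nat \<Rightarrow> int"
  assumes A: "A \<subseteq> {1..K}" and cA: "card A = S"
    and up: "\<forall>k\<in>A. \<forall>j\<in>{1..K}. j \<notin> A \<longrightarrow> g j \<le> g k"
  shows "card {k\<in>A. b \<le> g k} = min S (card {k\<in>{1..K}. b \<le> g k})"
proof (cases "\<exists>k\<in>A. g k < b")
  case True
  then obtain k where k: "k \<in> A" "g k < b" by blast
  have sub: "{k\<in>{1..K}. b \<le> g k} \<subseteq> A"
  proof
    fix j assume j: "j \<in> {k\<in>{1..K}. b \<le> g k}"
    show "j \<in> A"
    proof (rule ccontr)
      assume "j \<notin> A"
      then have "g j \<le> g k" using up k(1) j by blast
      then show False using j k(2) by simp
    qed
  qed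
  have eq: "{k\<in>A. b \<le> g k} = {k\<in>{1..K}. b \<le> g k}" using sub A by blast
  have "card {k\<in>{1..K}. b \<le> g k} \<le> S"
    using card_mono[OF finite_subset[OF A] sub] cA by simp
  then show ?thesis using eq by simp
next
  case False
  then have ge: "\<forall>k\<in>A. b \<le> g k" by (simp add: not_less)
  then have eq: "{k\<in>A. b \<le> g k} = A" by blast
  have "A \<subseteq> {k\<in>{1..K}. b \<le> g k}" using ge A by blast
  then have "S \<le> card {k\<in>{1..K}. b \<le> g k}" using cA card_mono[of "{k\<in>{1..K}. b \<le> g k}" A] by simp
  then show ?thesis using eq cA by simp
qed

lemma layer_cake:
  fixes g :: "nat \<Rightarrow> int"
  assumes fin: "finite A" and bnd: "\<forall>k\<in>A. 1 \<le> g k \<and> g k \<le> int M"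
  shows "sum g A = int (\<Sum>a\<in>{1..M}. card {k\<in>A. int a \<le> g k})"
proof -
  have "int (\<Sum>a\<in>{1..M}. card {k\<in>A. int a \<le> g k})
      = (\<Sum>a\<in>{1..M}. \<Sum>k\<in>A. (if int a \<le> g k then 1 else 0 :: int))"
    using fin by (simp add: sum.If_cases Int_def)
  also have "\<dots> = (\<Sum>k\<in>A. \<Sum>a\<in>{1..M}. (if int a \<le> g k then 1 else 0 :: int))"
    by (rule sum.swap)
  also have "\<dots> = (\<Sum>k\<in>A. g k)"
  proof (rule sum.cong)
    fix k assume k: "k \<in> A"
    have "{a\<in>{1..M}. int a \<le> g k} = {1..nat (g k)}" using bnd k by (auto simp: le_nat_iff)
    then have "(\<Sum>a\<in>{1..M}. (if int a \<le> g k then 1 else 0 :: int)) = int (nat (g k))"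
      by (simp add: sum.If_cases Int_def)
    then show "(\<Sum>a\<in>{1..M}. (if int a \<le> g k then 1 else 0 :: int)) = g k"
    proof -
      have "0 \<le> g k" using bnd k by force
      then show ?thesis using \<open>(\<Sum>a\<in>{1..M}. (if int a \<le> g k then 1 else 0 :: int)) = int (nat (g k))\<close> by simp
    qed
  qed simp
  finally show ?thesis by simp
qed

lemma min_sum: "(\<Sum>a\<in>{1..m}. min S (K - (a - 1) * S)) = min (m * S) (K::nat)"
proof (induction m)
  case 0 then show ?case by simp
next
  case (Suc m)
  have "(\<Sum>a\<in>{1..Suc m}. min S (K - (a - 1) * S)) = min (m * S) K + min S (K - m * S)"
    using Suc by simp
  also have "\<dots> = min (Suc m * S) K" by (cases "m * S \<le> K") auto
  finally show ?case .
qed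

lemma greedyD:
  assumes "greedy K S U G"
  shows "fst (G (g, h)) \<subseteq> {1..K} \<and> card (fst (G (g, h))) = S \<and>
        (\<forall>A. A \<subseteq> {1..K} \<and> card A = S \<longrightarrow> (\<Sum>k\<in>A. g k) \<le> (\<Sum>k\<in>fst (G (g, h)). g k)) \<and>
        snd (G (g, h)) \<subseteq> {1..K} \<and> card (snd (G (g, h))) = U \<and>
        (\<forall>A. A \<subseteq> {1..K} \<and> card A = U \<longrightarrow>
              (\<Sum>k\<in>A. h k - g k) \<le> (\<Sum>k\<in>snd (G (g, h)). h k - g k))"
proof -
  have "let (Ss, Us) = G (g, h) in
        Ss \<subseteq> {1..K} \<and> card Ss = S \<and>
        (\<forall>A. A \<subseteq> {1..K} \<and> card A = S \<longrightarrow> (\<Sum>k\<in>A. g k) \<le> (\<Sum>k\<in>Ss. g k)) \<and>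
        Us \<subseteq> {1..K} \<and> card Us = U \<and>
        (\<forall>A. A \<subseteq> {1..K} \<and> card A = U \<longrightarrow>
              (\<Sum>k\<in>A. h k - g k) \<le> (\<Sum>k\<in>Us. h k - g k))"
    using assms unfolding greedy_def by (drule_tac x=g in spec, drule_tac x=h in spec) assumption
  then show ?thesis by (cases "G (g, h)") simp
qed

lemma step_eq: "step G (g, h) =
   ((\<lambda>k. if k \<in> fst (G (g, h)) then 1 else g k + 1),
    (\<lambda>k. if k \<in> snd (G (g, h)) then g k + 1 else h k + 1))"
  unfolding step_def by (cases "G (g, h)") simp

definition inv :: "nat \<Rightarrow> nat \<Rightarrow> nat \<Rightarrow> (nat \<Rightarrow> int) \<Rightarrow> (nat \<Rightarrow> int) \<Rightarrow> bool" where
  "inv K S n g h \<longleftrightarrow>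
    (\<forall>k\<in>{1..K}. 1 \<le> g k \<and> g k \<le> int (n+1)) \<and>
    (\<forall>a. 1 \<le> a \<longrightarrow> card {k\<in>{1..K}. int a \<le> g k} = (if a \<le> n+1 then K - (a-1)*S else 0)) \<and>
    (\<forall>k\<in>{1..K}. 0 \<le> h k - g k) \<and>
    (\<exists>P\<subseteq>{1..K}. card P \<le> S \<and> (\<forall>k\<in>{1..K}-P. h k = g k))"

context
  fixes K S :: nat and G :: policy
  assumes gr: "greedy K S S G" and S1: "1 \<le> S"
begin

lemma A_props:
  shows "fst (G (g, h)) \<subseteq> {1..K}" "card (fst (G (g, h))) = S"
    "snd (G (g, h)) \<subseteq> {1..K}" "card (snd (G (g, h))) = S"
  using greedyD[OF gr, of g h] by auto

lemma A_up:
  "\<forall>k\<in>fst (G (g, h)). \<forall>j\<in>{1..K}. j \<notin> fst (G (g, h)) \<longrightarrow> g j \<le> g k"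
proof (intro ballI impI)
  fix k j assume kj: "k \<in> fst (G (g, h))" "j \<in> {1..K}" "j \<notin> fst (G (g, h))"
  note G = greedyD[OF gr, of g h]
  show "g j \<le> g k"
    by (rule opt_swap[of "fst (G (g, h))" K S g k j]) (use G kj in blast)+
qed

lemma B_up:
  "\<forall>k\<in>snd (G (g, h)). \<forall>j\<in>{1..K}. j \<notin> snd (G (g, h)) \<longrightarrow> h j - g j \<le> h k - g k"
proof (intro ballI impI)
  fix k j assume kj: "k \<in> snd (G (g, h))" "j \<in> {1..K}" "j \<notin> snd (G (g, h))"
  note G = greedyD[OF gr, of g h]
  show "h j - g j \<le> h k - g k"
    by (rule opt_swap[of "snd (G (g, h))" K S "\<lambda>k. h k - g k" k j]) (use G kj in blast)+
qed

lemma L_RS: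
  assumes "inv K S n g h"
  shows "sum g (fst (G (g, h))) = int (min ((n+1)*S) K)"
proof -
  let ?A = "fst (G (g, h))"
  have Asub: "?A \<subseteq> {1..K}" and cA: "card ?A = S" using A_props by auto
  have fin: "finite ?A" using Asub finite_subset by blast
  have bnd: "\<forall>k\<in>?A. 1 \<le> g k \<and> g k \<le> int (n+1)" using assms Asub unfolding inv_def by blast
  have "sum g ?A = int (\<Sum>a\<in>{1..n+1}. card {k\<in>?A. int a \<le> g k})"
    by (rule layer_cake[OF fin bnd])
  also have "(\<Sum>a\<in>{1..n+1}. card {k\<in>?A. int a \<le> g k}) = (\<Sum>a\<in>{1..n+1}. min S (K - (a - 1) * S))"
  proof (rule sum.cong)
    fix a assume a: "a \<in> {1..n+1}"
    have "card {k\<in>?A. int a \<le> g k} = min S (card {k\<in>{1..K}. int a \<le> g k})"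
      by (rule upper_card[OF Asub cA A_up])
    also have "card {k\<in>{1..K}. int a \<le> g k} = K - (a-1)*S"
      using assms a unfolding inv_def by auto
    finally show "card {k\<in>?A. int a \<le> g k} = min S (K - (a - 1) * S)" .
  qed simp
  also have "\<dots> = min ((n+1)*S) K" by (rule min_sum)
  finally show ?thesis .
qed

lemma L_zero:
  assumes "inv K S n g h"
  shows "\<forall>j\<in>{1..K} - snd (G (g, h)). h j = g j"
proof (rule ccontr)
  let ?B = "snd (G (g, h))"
  assume "\<not> ?thesis"
  then obtain j where j: "j \<in> {1..K}" "j \<notin> ?B" "h j \<noteq> g j" by blast
  obtain P where P: "P \<subseteq> {1..K}" "card P \<le> S" "\<forall>k\<in>{1..K}-P. h k = g k"
    using assms unfolding inv_def by blast
  have nn: "\<forall>k\<in>{1..K}. 0 \<le> h k - g k" using assms unfolding inv_def by blast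
  have pos: "0 < h j - g j" using nn j by force
  have Bsub: "?B \<subseteq> {1..K}" and cB: "card ?B = S" using A_props by auto
  have "\<forall>k\<in>?B. h j - g j \<le> h k - g k" using B_up j by blast
  then have "\<forall>k\<in>?B. k \<in> P"
  proof (intro ballI)
    fix k assume k: "k \<in> ?B" and H: "\<forall>k\<in>?B. h j - g j \<le> h k - g k"
    then have "h k \<noteq> g k" using pos by force
    moreover have "k \<in> {1..K}" using k Bsub by blast
    ultimately show "k \<in> P" using P(3) by blast
  qed
  moreover have "j \<in> P" using P(3) j by blast
  ultimately have "insert j ?B \<subseteq> P" by blast
  then have "card (insert j ?B) \<le> card P"
    using card_mono finite_subset[OF P(1)] by blast
  moreover have "card (insert j ?B) = S + 1"
    using j cB finite_subset[OF Bsub] by simp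
  ultimately show False using P(2) by simp
qed

lemma L_RU_sum:
  assumes "inv K S n g h"
  shows "(\<Sum>k\<in>snd (G (g, h)). h k - g k) = (\<Sum>k\<in>{1..K}. h k - g k)"
  using L_zero[OF assms] A_props(3)[of g h]
  by (intro sum.mono_neutral_left) auto

lemma L_step:
  assumes iv: "inv K S n g h"
  shows "inv K S (n+1) (fst (step G (g, h))) (snd (step G (g, h)))"
proof -
  let ?A = "fst (G (g, h))" and ?B = "snd (G (g, h))"
  define g' where "g' = (\<lambda>k. if k \<in> ?A then 1 else g k + (1::int))"
  define h' where "h' = (\<lambda>k. if k \<in> ?B then g k + 1 else h k + (1::int))"
  have st: "step G (g, h) = (g', h')" unfolding g'_def h'_def by (rule step_eq)
  have Asub: "?A \<subseteq> {1..K}" and cA: "card ?A = S" using A_props by auto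
  have bnd: "\<forall>k\<in>{1..K}. 1 \<le> g k \<and> g k \<le> int (n+1)" using iv unfolding inv_def by blast
  have C: "\<forall>a. 1 \<le> a \<longrightarrow> card {k\<in>{1..K}. int a \<le> g k} = (if a \<le> n+1 then K - (a-1)*S else 0)"
    using iv unfolding inv_def by blast
  have Z: "\<forall>j\<in>{1..K} - ?B. h j = g j" by (rule L_zero[OF iv])
  have d': "\<forall>k\<in>{1..K}. h' k - g' k = (if k \<in> ?A then g k else 0)"
    using Z unfolding g'_def h'_def by auto
  have i1: "\<forall>k\<in>{1..K}. 1 \<le> g' k \<and> g' k \<le> int (n+1+1)"
    using bnd unfolding g'_def by auto
  have i2: "\<forall>a. 1 \<le> a \<longrightarrow> card {k\<in>{1..K}. int a \<le> g' k} = (if a \<le> n+1+1 then K - (a-1)*S else 0)"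
  proof (intro allI impI)
    fix a :: nat assume a: "1 \<le> a"
    show "card {k\<in>{1..K}. int a \<le> g' k} = (if a \<le> n+1+1 then K - (a-1)*S else 0)"
    proof (cases "a = 1")
      case True
      then have "{k\<in>{1..K}. int a \<le> g' k} = {1..K}" using bnd unfolding g'_def by auto
      then show ?thesis using True by simp
    next
      case False
      define b where "b = a - 1"
      have b: "a = b + 1" "1 \<le> b" using a False by (simp_all add: b_def)
      have eq: "{k\<in>{1..K}. int a \<le> g' k} = {k\<in>{1..K}. int b \<le> g k} - {k\<in>?A. int b \<le> g k}"
        using b unfolding g'_def by auto
      have sub: "{k\<in>?A. int b \<le> g k} \<subseteq> {k\<in>{1..K}. int b \<le> g k}" using Asub by auto
      have "card {k\<in>{1..K}. int a \<le> g' k} = card {k\<in>{1..K}. int b \<le> g k} - card {k\<in>?A. int b \<le> g k}"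
        unfolding eq by (rule card_Diff_subset[OF finite_subset[OF sub] sub]) simp
      also have "card {k\<in>?A. int b \<le> g k} = min S (card {k\<in>{1..K}. int b \<le> g k})"
        by (rule upper_card[OF Asub cA A_up])
      finally have cc: "card {k\<in>{1..K}. int a \<le> g' k} =
          card {k\<in>{1..K}. int b \<le> g k} - min S (card {k\<in>{1..K}. int b \<le> g k})" .
      show ?thesis
      proof (cases "b \<le> n+1")
        case True
        then have "card {k\<in>{1..K}. int b \<le> g k} = K - (b-1)*S" using C b by simp
        moreover have "K - (b-1)*S - min S (K - (b-1)*S) = K - (a-1)*S"
        proof -
          have e1: "K - (b-1)*S - min S (K - (b-1)*S) = K - (b-1)*S - S" by (simp add: min_def)
          have e3: "(b-1)*S + S = (a-1)*S" using b by (cases b) auto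
          show ?thesis using e1 e3 by (metis diff_diff_left)
        qed
        ultimately show ?thesis using cc True b by simp
      next
        case False
        then show ?thesis using cc C b by simp
      qed
    qed
  qed
  have i3: "\<forall>k\<in>{1..K}. 0 \<le> h' k - g' k" using d' bnd by force
  have i4: "\<exists>P\<subseteq>{1..K}. card P \<le> S \<and> (\<forall>k\<in>{1..K}-P. h' k = g' k)"
    using d' Asub cA by (intro exI[of _ ?A]) force
  show ?thesis unfolding st inv_def using i1 i2 i3 i4 by simp
qed

lemma L_aoi: "inv K S n (fst (aoi G n)) (snd (aoi G n))"
proof (induction n)
  case 0
  have "\<forall>a. 1 \<le> a \<longrightarrow> card {k\<in>{1..K}. int a \<le> (1::int)} = (if a \<le> 0+1 then K - (a-1)*S else 0)"
  proof (intro allI impI)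
    fix a :: nat assume a: "1 \<le> a"
    show "card {k\<in>{1..K}. int a \<le> (1::int)} = (if a \<le> 0+1 then K - (a-1)*S else 0)"
    proof (cases "a = 1")
      case True
      have "{k\<in>{1..K}. int 1 \<le> (1::int)} = {1..K}" by auto
      then show ?thesis using True by simp
    next
      case False
      then show ?thesis using a by simp
    qed
  qed
  then show ?case unfolding inv_def by auto
next
  case (Suc n)
  obtain g h where gh: "aoi G n = (g, h)" by (cases "aoi G n")
  show ?case using L_step[of n g h] Suc gh by simp
qed

end

theorem proposition3:
  fixes K S U :: nat and G :: policy
  assumes "K \<ge> 2" and "1 \<le> S" and "S < K" and "1 \<le> U" and "U < K" and "S = U"
    and "greedy K S U G"
    and "t \<ge> 1"
  shows "R_S G t = int (min (t * S) K) \<and> R_U G t = int (min ((t - 1) * U) K)"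
proof -
  have gr: "greedy K S S G" using assms by simp
  obtain n where n: "t = n + 1" using assms(8) by (metis le_add_diff_inverse2)
  obtain g h where gh: "aoi G n = (g, h)" by (cases "aoi G n")
  have st: "state_at G t = (g, h)" unfolding state_at_def using n gh by simp
  have iv: "inv K S n g h" using L_aoi[OF gr assms(2), of n] gh by simp
  have RS: "R_S G t = int (min (t * S) K)"
    unfolding R_S_def Sset_def st using L_RS[OF gr assms(2) iv] n by simp
  have "R_U G t = (\<Sum>k\<in>{1..K}. h k - g k)"
    unfolding R_U_def Uset_def st using L_RU_sum[OF gr assms(2) iv] by simp
  also have "\<dots> = int (min ((t - 1) * U) K)"
  proof (cases n)
    case 0
    then show ?thesis using gh n by auto
  next
    case (Suc m)
    obtain g0 h0 where gh0: "aoi G m = (g0, h0)" by (cases "aoi G m")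
    have iv0: "inv K S m g0 h0" using L_aoi[OF gr assms(2), of m] gh0 by simp
    have stp: "(g, h) = step G (g0, h0)" using gh gh0 Suc by simp
    have Z: "\<forall>j\<in>{1..K} - snd (G (g0, h0)). h0 j = g0 j" by (rule L_zero[OF gr assms(2) iv0])
    have A0: "fst (G (g0, h0)) \<subseteq> {1..K}" using A_props[OF gr assms(2)] by auto
    have "\<forall>k\<in>{1..K}. h k - g k = (if k \<in> fst (G (g0, h0)) then g0 k else 0)"
      using stp Z unfolding step_eq by auto
    then have "(\<Sum>k\<in>{1..K}. h k - g k) = (\<Sum>k\<in>{1..K}. if k \<in> fst (G (g0, h0)) then g0 k else 0)"
      by (intro sum.cong) auto
    also have "\<dots> = sum g0 (fst (G (g0, h0)))"
      using A0 by (simp add: sum.If_cases Int_absorb1 Int_commute)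
    also have "\<dots> = int (min ((m+1)*S) K)" by (rule L_RS[OF gr assms(2) iv0])
    finally show ?thesis using Suc n assms(6) by simp
  qed
  finally show ?thesis using RS by simp
qed

end
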